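(* Let $\lambda_1\ge0$ and $\lambda_2>0$, let $\langle f,g\rangle_S=\int_{\mathbb R}fg\,e^{-x^4}dx+\lambda_1f(0)g(0)+\lambda_2f'(0)g'(0)$, and let $(\widehat Q_n)_{n\ge0}$ be the orthonormal polynomials for $\langle\cdot,\cdot\rangle_S$ ($\deg\widehat Q_n=n$, positive leading coefficient, $\langle\widehat Q_n,\widehat Q_m\rangle_S=\delta_{nm}$), with $\widehat Q_{-1}=\widehat Q_{-2}=0$. Then: (1) there are real numbers $\alpha_n$ and $\beta_n$ such that for all $n\ge0$, $$x^2\widehat Q_n(x)=\alpha_n\widehat Q_{n+2}(x)+\beta_n\widehat Q_n(x)+\alpha_{n-2}\widehat Q_{n-2}(x);$$ (2) for every $n\ge2$, the zeros of $\widehat Q_n$ are real and interlace with the zeros of $\widehat Q_{n-2}$.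
   Context: The polynomials $\widehat Q_n$ have the parity of $n$. "Interlace" means: if $0<y_1<\dots<y_p$ are the positive zeros of $\widehat Q_n$, then $\widehat Q_{n-2}$ has exactly $p-1$ positive zeros $z_1<\dots<z_{p-1}$ and $y_1<z_1<y_2<z_2<\dots<z_{p-1}<y_p$ (the negative zeros being symmetric). The values of $\alpha_{-1},\alpha_{-2}$ are irrelevant since they multiply $\widehat Q_{-1}=\widehat Q_{-2}=0$. *)

theory Defs
  imports "HOL-Analysis.Analysis" "HOL-Computational_Algebra.Polynomial"
begin

definition sob_ip :: "real \<Rightarrow> real \<Rightarrow> real poly \<Rightarrow> real poly \<Rightarrow> real" where
  "sob_ip l1 l2 f g =
     (\<integral>x. poly f x * poly g x * exp (- (x ^ 4)) \<partial>lborel)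
     + l1 * poly f 0 * poly g 0
     + l2 * poly (pderiv f) 0 * poly (pderiv g) 0"

definition pos_zeros :: "real poly \<Rightarrow> real list" where
  "pos_zeros p = sorted_list_of_set {y. 0 < y \<and> poly p y = 0}"

definition interlace :: "real poly \<Rightarrow> real poly \<Rightarrow> bool" where
  "interlace p q =
     (let ys = pos_zeros p; zs = pos_zeros q in
        length zs + 1 = length ys \<and>
        (\<forall>i < length zs. ys ! i < zs ! i \<and> zs ! i < ys ! (i + 1)))"

end

theory Submission imports Defs "HOL-Probability.Distributions" begin

lemma exp4_bound: "exp (- ((x::real)^4)) \<le> exp 1 * sqrt (2*pi) * std_normal_density x"
proof -
  have "- (x^4) \<le> 1 + (- x\<^sup>2 / 2)"
  proof -
    have "0 \<le> (x^2 - 1/4)^2" by simp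
    then show ?thesis by (simp add: power2_eq_square power4_eq_xxxx algebra_simps) 
  qed
  then have "exp (- (x^4)) \<le> exp (1 + (- x\<^sup>2 / 2))" by simp
  also have "\<dots> = exp 1 * sqrt (2*pi) * std_normal_density x"
    using exp_add[of 1 "- x\<^sup>2 / 2"] by (simp add: std_normal_density_def)
  finally show ?thesis .
qed

lemma integrable_mon: "integrable lborel (\<lambda>x::real. x^k * exp (- (x^4)))"
proof (rule Bochner_Integration.integrable_bound)
  show "integrable lborel (\<lambda>x. exp 1 * sqrt (2*pi) * (std_normal_density x * \<bar>x\<bar>^k))"
    using integrable_std_normal_moment_abs by (intro integrable_mult_right) 
  show "(\<lambda>x::real. x^k * exp (- (x^4))) \<in> borel_measurable lborel" by measurable
  show "AE x in lborel. norm (x^k * exp (- (x^4))) \<le> norm (exp 1 * sqrt (2*pi) * (std_normal_density x * \<bar>x\<bar>^k))"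
  proof (intro AE_I2)
    fix x :: real
    have d: "0 \<le> std_normal_density x" by (simp add: normal_density_nonneg)
    have "norm (x^k * exp (- (x^4))) = \<bar>x\<bar>^k * exp (- (x^4))" by (simp add: abs_mult power_abs)
    also have "\<dots> \<le> \<bar>x\<bar>^k * (exp 1 * sqrt (2*pi) * std_normal_density x)"
      by (intro mult_left_mono exp4_bound) auto
    also have "\<dots> = norm (exp 1 * sqrt (2*pi) * (std_normal_density x * \<bar>x\<bar>^k))"
      using d by (simp add: abs_mult)
    finally show "norm (x^k * exp (- (x^4))) \<le> norm (exp 1 * sqrt (2*pi) * (std_normal_density x * \<bar>x\<bar>^k))" .
  qed
qed

lemma integrable_poly: "integrable lborel (\<lambda>x::real. poly p x * exp (- (x^4)))"
proof -
  have "(\<lambda>x::real. poly p x * exp (- (x^4))) = (\<lambda>x. \<Sum>i\<le>degree p. coeff p i * (x^i * exp (- (x^4))))"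
    by (simp add: poly_altdef sum_distrib_right mult.assoc)
  moreover have "integrable lborel (\<lambda>x. \<Sum>i\<le>degree p. coeff p i * (x^i * exp (- (x^4))))"
    by (intro Bochner_Integration.integrable_sum integrable_mult_right integrable_mon)
  ultimately show ?thesis by simp
qed

lemma integrable_poly2: "integrable lborel (\<lambda>x::real. poly p x * poly q x * exp (- (x^4)))"
  using integrable_poly[of "p*q"] by simp

lemma sob_ip_sym: "sob_ip l1 l2 f g = sob_ip l1 l2 g f"
  unfolding sob_ip_def by (simp add: mult.commute mult.left_commute)

lemma sob_ip_add_left: "sob_ip l1 l2 (f + g) h = sob_ip l1 l2 f h + sob_ip l1 l2 g h"
proof -
  have "(\<integral>x. poly (f+g) x * poly h x * exp (- (x ^ 4)) \<partial>lborel)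
     = (\<integral>x. poly f x * poly h x * exp (- (x ^ 4)) + poly g x * poly h x * exp (- (x ^ 4)) \<partial>lborel)"
    by (simp add: algebra_simps)
  also have "\<dots> = (\<integral>x. poly f x * poly h x * exp (- (x ^ 4)) \<partial>lborel) + (\<integral>x. poly g x * poly h x * exp (- (x ^ 4)) \<partial>lborel)"
    by (intro Bochner_Integration.integral_add integrable_poly2)
  finally show ?thesis unfolding sob_ip_def by (simp add: algebra_simps pderiv_add)
qed

lemma sob_ip_smult_left: "sob_ip l1 l2 (smult c f) h = c * sob_ip l1 l2 f h"
proof -
  have "(\<integral>x. poly (smult c f) x * poly h x * exp (- (x ^ 4)) \<partial>lborel)
     = (\<integral>x. c * (poly f x * poly h x * exp (- (x ^ 4))) \<partial>lborel)"
    by (simp add: algebra_simps)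
  also have "\<dots> = c * (\<integral>x. poly f x * poly h x * exp (- (x ^ 4)) \<partial>lborel)"
    by simp
  finally show ?thesis unfolding sob_ip_def by (simp add: algebra_simps pderiv_smult)
qed

lemma sob_ip_smult_right: "sob_ip l1 l2 h (smult c f) = c * sob_ip l1 l2 h f"
  using sob_ip_smult_left[of l1 l2 c f h] sob_ip_sym[of l1 l2 h] by simp

lemma sob_ip_zero_left[simp]: "sob_ip l1 l2 0 h = 0"
  using sob_ip_smult_left[of l1 l2 0 0 h] by simp

lemma sob_ip_sum_left: "sob_ip l1 l2 (\<Sum>k\<in>A. F k) h = (\<Sum>k\<in>A. sob_ip l1 l2 (F k) h)"
  by (induction A rule: infinite_finite_induct) (auto simp: sob_ip_add_left)

lemma sob_ip_diff_left: "sob_ip l1 l2 (f - g) h = sob_ip l1 l2 f h - sob_ip l1 l2 g h"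
  using sob_ip_add_left[of l1 l2 "f - g" g h] by simp

lemma sob_ip_x2: "sob_ip l1 l2 ([:0,0,1:] * f) g = (\<integral>x. x^2 * (poly f x * poly g x * exp (- (x ^ 4))) \<partial>lborel)"
  unfolding sob_ip_def by (simp add: pderiv_mult pderiv_pCons algebra_simps power2_eq_square)

lemma sob_ip_x2_sym: "sob_ip l1 l2 ([:0,0,1:] * f) g = sob_ip l1 l2 f ([:0,0,1:] * g)"
  using sob_ip_x2[of l1 l2 f g] sob_ip_x2[of l1 l2 g f] sob_ip_sym[of l1 l2 f "[:0,0,1:] * g"]
  by (simp add: mult.commute mult.left_commute)

lemma integral_reflect_lborel: "(\<integral>x. F (- x) \<partial>lborel) = (\<integral>x. F x \<partial>lborel)" for F :: "real \<Rightarrow> real"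
  using lborel_integral_real_affine[of "-1" F 0] by simp

lemma sob_ip_reflect:
  "sob_ip l1 l2 (f \<circ>\<^sub>p [:0,-1:]) (g \<circ>\<^sub>p [:0,-1:]) = sob_ip l1 l2 f g"
proof -
  have "(\<integral>x. poly (f \<circ>\<^sub>p [:0,-1:]) x * poly (g \<circ>\<^sub>p [:0,-1:]) x * exp (- (x ^ 4)) \<partial>lborel)
      = (\<integral>x. (\<lambda>y. poly f y * poly g y * exp (- (y ^ 4))) (-x) \<partial>lborel)"
    by (simp add: poly_pcompose)
  also have "\<dots> = (\<integral>x. poly f x * poly g x * exp (- (x ^ 4)) \<partial>lborel)"
    by (rule integral_reflect_lborel)
  finally show ?thesis unfolding sob_ip_def by (simp add: poly_pcompose pderiv_pcompose pderiv_pCons)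
qed

lemma integral_poly_pos:
  fixes q :: "real poly"
  assumes nn: "\<And>x. poly q x \<ge> 0" and pos: "poly q x0 > 0"
  shows "(\<integral>x. poly q x * exp (- (x^4)) \<partial>lborel) > 0"
proof -
  define F where "F x = poly q x * exp (- (x^4))" for x :: real
  have cont: "isCont F x0" unfolding F_def by (intro continuous_intros)
  have F0: "F x0 > 0" using pos unfolding F_def by simp
  obtain d where d: "d > 0" and dd: "\<And>x. dist x x0 < d \<Longrightarrow> dist (F x) (F x0) < F x0 / 2"
    using cont F0 unfolding continuous_at_eps_delta by (metis half_gt_zero)
  have Fnn: "\<And>x. F x \<ge> 0" unfolding F_def using nn by simp
  have bound: "F x0 / 2 * indicator {x0 - d/2 .. x0 + d/2} x \<le> F x" for x
  proof (cases "x \<in> {x0 - d/2 .. x0 + d/2}")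
    case True
    then have "dist x x0 < d" using d by (auto simp: dist_real_def abs_if)
    then have "dist (F x) (F x0) < F x0 / 2" by (rule dd)
    then show ?thesis using True by (auto simp: dist_real_def abs_if split: if_splits)
  next
    case False then show ?thesis using Fnn by simp
  qed
  have "(\<integral>x. F x0 / 2 * indicator {x0 - d/2 .. x0 + d/2} x \<partial>lborel) \<le> (\<integral>x. F x \<partial>lborel)"
    by (intro integral_mono bound integrable_mult_right integrable_real_indicator)
       (auto simp: F_def integrable_poly emeasure_lborel_Icc_eq)
  moreover have "(\<integral>x. F x0 / 2 * indicator {x0 - d/2 .. x0 + d/2} x \<partial>lborel) = F x0 / 2 * d"
    using d by simp
  moreover have "F x0 / 2 * d > 0" using F0 d by simp
  ultimately show ?thesis unfolding F_def by linarith
qed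

definition par :: "nat \<Rightarrow> real poly \<Rightarrow> bool" where
  "par e p \<longleftrightarrow> p \<circ>\<^sub>p [:0,-1:] = smult ((-1)^e) p"

lemma refl_refl: "p \<circ>\<^sub>p [:0,-1:] \<circ>\<^sub>p [:0,-1:] = (p::real poly)"
proof -
  have "p \<circ>\<^sub>p [:0,-1:] \<circ>\<^sub>p [:0,-1:] = p \<circ>\<^sub>p ([:0,-1:] \<circ>\<^sub>p [:0,-1:])"
    by (simp add: pcompose_assoc)
  also have "[:0,-1:] \<circ>\<^sub>p [:0,-1:] = ([:0,1:] :: real poly)" by (simp add: pcompose_pCons)
  finally show ?thesis by (simp add: pcompose_idR)
qed

lemma par_poly: "par e p \<Longrightarrow> poly p (-x) = (-1)^e * poly p x"
proof -
  assume "par e p"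
  then have "poly (p \<circ>\<^sub>p [:0,-1:]) x = poly (smult ((-1)^e) p) x" unfolding par_def by simp
  then show ?thesis by (simp add: poly_pcompose)
qed

lemma par_mult: "par a p \<Longrightarrow> par b q \<Longrightarrow> par (a+b) (p*q)"
  unfolding par_def by (simp add: pcompose_mult power_add mult_smult_left mult_smult_right mult.commute)

lemma par_smult: "par a p \<Longrightarrow> par a (smult c p)"
  unfolding par_def by (simp add: pcompose_smult smult_smult mult.commute)

lemma par_X2: "par 2 [:0,0,1:]"
  unfolding par_def by (simp add: pcompose_pCons)

lemma par_X: "par 1 [:0,1:]"
  unfolding par_def by (simp add: pcompose_pCons)

lemma par_const: "par 0 [:c:]"
  unfolding par_def by (simp add: pcompose_pCons)

lemma par_mod2: "par e p \<Longrightarrow> par (e + 2*k) p"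
  unfolding par_def by (simp add: power_add power_mult)

lemma par_odd0: "par e p \<Longrightarrow> odd e \<Longrightarrow> poly p 0 = 0"
  using par_poly[of e p 0] by simp

lemma par_deriv0: "par e p \<Longrightarrow> even e \<Longrightarrow> poly (pderiv p) 0 = 0"
proof -
  assume pe: "par e p" and ev: "even e"
  then have "p \<circ>\<^sub>p [:0,-1:] = p" unfolding par_def by simp
  then have "pderiv (p \<circ>\<^sub>p [:0,-1:]) = pderiv p" by simp
  then have "poly (pderiv (p \<circ>\<^sub>p [:0,-1:])) 0 = poly (pderiv p) 0" by simp
  then show ?thesis by (simp add: pderiv_pcompose poly_pcompose pderiv_pCons)
qed

lemma par_ip: "par a p \<Longrightarrow> par b q \<Longrightarrow> odd (a + b) \<Longrightarrow> sob_ip l1 l2 p q = 0"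
proof -
  assume pa: "par a p" and pb: "par b q" and o: "odd (a+b)"
  have "sob_ip l1 l2 p q = sob_ip l1 l2 (p \<circ>\<^sub>p [:0,-1:]) (q \<circ>\<^sub>p [:0,-1:])"
    by (simp add: sob_ip_reflect)
  also have "\<dots> = (-1)^a * (-1)^b * sob_ip l1 l2 p q"
    using pa pb unfolding par_def
    by (simp add: sob_ip_smult_left sob_ip_smult_right)
  also have "\<dots> = - sob_ip l1 l2 p q" using o by (simp flip: power_add)
  finally show ?thesis by simp
qed

lemma prod_roots_dvd:
  fixes p :: "real poly"
  assumes "finite A" "\<And>a. a \<in> A \<Longrightarrow> poly p a = 0"
  shows "\<exists>r. p = (\<Prod>a\<in>A. [:-a,1:]) * r"
  using assms
proof (induction A arbitrary: p rule: finite_induct)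
  case empty then show ?case by simp
next
  case (insert a B)
  then obtain r where r: "p = (\<Prod>b\<in>B. [:-b,1:]) * r" by blast
  have "poly (\<Prod>b\<in>B. [:-b,1:]) a \<noteq> 0"
    using insert.hyps by (simp add: poly_prod prod_zero_iff)
  moreover have "poly p a = 0" using insert.prems by simp
  ultimately have "poly r a = 0" using r by simp
  then obtain r' where rr: "r = [:-a,1:] * r'" by (metis dvdE poly_eq_0_iff_dvd)
  have "p = ([:-a,1:] * (\<Prod>b\<in>B. [:-b,1:])) * r'" by (simp only: r rr ac_simps)
  moreover have "(\<Prod>c\<in>insert a B. [:-c,1:]) = [:-a,1:] * (\<Prod>b\<in>B. [:-b,1:])"
    using insert.hyps by (rule prod.insert)
  ultimately show ?case by metis
qed

lemma consec_deriv:
  fixes f :: "real poly"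
  assumes ab: "a < b" and fa: "poly f a = 0" and fb: "poly f b = 0"
    and nz: "\<And>x. a < x \<Longrightarrow> x < b \<Longrightarrow> poly f x \<noteq> 0"
    and da: "poly (pderiv f) a \<noteq> 0" and db: "poly (pderiv f) b \<noteq> 0"
  shows "poly (pderiv f) a * poly (pderiv f) b < 0"
proof -
  obtain r where r: "f = (\<Prod>c\<in>{a,b}. [:-c,1:]) * r"
    using prod_roots_dvd[of "{a,b}" f] fa fb by auto
  then have r': "f = [:-a,1:] * [:-b,1:] * r" using ab by simp
  have d: "pderiv f = [:-a,1:] * [:-b,1:] * pderiv r + r * pderiv ([:-a,1:] * [:-b,1:])"
    by (subst r') (rule pderiv_mult)
  have dd: "poly (pderiv ([:-a,1:] * [:-b,1:])) x = (x - b) + (x - a)" for x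
    by (simp add: pderiv_mult pderiv_pCons)
  have pf: "poly (pderiv f) x = poly ([:-a,1:] * [:-b,1:]) x * poly (pderiv r) x + poly r x * ((x - b) + (x - a))" for x
    by (simp only: d poly_add poly_mult dd)
  have pa: "poly (pderiv f) a = (a - b) * poly r a" using pf[of a] by simp
  have pb: "poly (pderiv f) b = (b - a) * poly r b" using pf[of b] by simp
  have ra: "poly r a \<noteq> 0" and rb: "poly r b \<noteq> 0" using pa pb da db by auto
  have "poly r a * poly r b > 0"
  proof (rule ccontr)
    assume "\<not> poly r a * poly r b > 0"
    then have "poly r a * poly r b < 0" using ra rb by (simp add: not_less le_less mult_eq_0_iff)
    then obtain x where x: "a < x" "x < b" "poly r x = 0" using poly_IVT[OF ab] by blast
    then have "poly f x = 0" using r' by simp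
    then show False using nz x by blast
  qed
  moreover have "poly (pderiv f) a * poly (pderiv f) b = - ((b - a)^2 * (poly r a * poly r b))"
    unfolding pa pb by (simp add: power2_eq_square algebra_simps)
  moreover have "(b - a)^2 > 0" using ab by simp
  ultimately show ?thesis by (simp add: mult_pos_pos)
qed

lemma poly_zero_outside_finite:
  fixes p :: "real poly"
  assumes "finite A" "\<And>x. x \<notin> A \<Longrightarrow> poly p x = 0"
  shows "p = 0"
proof (rule ccontr)
  assume "p \<noteq> 0"
  then have "finite {x. poly p x = 0}" by (rule poly_roots_finite)
  moreover have "UNIV \<subseteq> A \<union> {x. poly p x = 0}" using assms(2) by auto
  ultimately have "finite (UNIV :: real set)" using assms(1) by (meson finite_Un finite_subset)
  then show False by (simp add: infinite_UNIV_char_0)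
qed

lemma ex_pos_notin: "finite (A::real set) \<Longrightarrow> \<exists>x>0. x \<notin> A"
proof -
  assume f: "finite A"
  define x where "x = Max (insert 1 A) + 1"
  have "a < x" if "a \<in> insert 1 A" for a
  proof -
    have "a \<le> Max (insert 1 A)" using f that by (intro Max_ge) auto
    then show ?thesis unfolding x_def by simp
  qed
  then have "1 < x" "\<And>a. a \<in> A \<Longrightarrow> a < x" by auto
  then show ?thesis by (intro exI[of _ x]) force
qed

lemma same_sign_pos:
  fixes T :: "real poly"
  assumes nz: "\<And>x. x > 0 \<Longrightarrow> poly T x \<noteq> 0" and x: "x > 0" and y: "y > 0"
  shows "poly T x * poly T y > 0"
proof (rule ccontr)
  assume "\<not> poly T x * poly T y > 0"
  then have neg: "poly T x * poly T y < 0" using nz[OF x] nz[OF y] by (simp add: not_less le_less mult_eq_0_iff)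
  then have "x \<noteq> y" by auto
  then have "x < y \<or> y < x" by auto
  then obtain c where "c > min x y" "poly T c = 0"
    using poly_IVT[of x y T] poly_IVT[of y x T] neg by (auto simp: mult.commute)
  moreover have "min x y > 0" using x y by simp
  ultimately show False using nz by force
qed

lemma poly_of_real_map: "poly (map_poly complex_of_real p) (of_real x) = of_real (poly p x)"
  by (induction p) (auto simp: map_poly_pCons)

lemma sorted_list_strict:
  fixes S :: "real set"
  assumes "finite S" "i < j" "j < card S"
  shows "sorted_list_of_set S ! i < sorted_list_of_set S ! j"
proof -
  let ?xs = "sorted_list_of_set S"
  have "?xs ! i \<le> ?xs ! j" using assms by (intro sorted_nth_mono) auto
  moreover have "?xs ! i \<noteq> ?xs ! j"
    using assms nth_eq_iff_index_eq[of ?xs i j] distinct_sorted_list_of_set[of S] by auto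
  ultimately show ?thesis by simp
qed

locale sob =
  fixes l1 l2 :: real and Q :: "nat \<Rightarrow> real poly"
  assumes l1: "l1 \<ge> 0" and l2: "l2 > 0"
    and deg: "\<And>n. degree (Q n) = n"
    and lead: "\<And>n. lead_coeff (Q n) > 0"
    and orth: "\<And>n m. sob_ip l1 l2 (Q n) (Q m) = (if n = m then 1 else 0)"
begin

abbreviation ip where "ip \<equiv> sob_ip l1 l2"

lemma Q_nz: "Q n \<noteq> 0"
  using lead[of n] by auto

lemma span: "degree p \<le> n \<Longrightarrow> \<exists>c. p = (\<Sum>k\<le>n. smult (c k) (Q k))"
proof (induction n arbitrary: p)
  case 0
  then obtain a where p: "p = [:a:]" by (metis degree_eq_zeroE le_zero_eq)
  obtain b where q: "Q 0 = [:b:]" and b: "b \<noteq> 0" using deg[of 0] Q_nz[of 0]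
    by (metis degree_eq_zeroE pCons_0_0)
  show ?case
    by (rule exI[of _ "\<lambda>_. a / b"]) (use p q b in simp)
next
  case (Suc n)
  define c0 where "c0 = coeff p (Suc n) / lead_coeff (Q (Suc n))"
  define p' where "p' = p - smult c0 (Q (Suc n))"
  have lc: "lead_coeff (Q (Suc n)) \<noteq> 0" using lead[of "Suc n"] by linarith
  have "degree p' \<le> n"
  proof (rule degree_le, intro allI impI)
    fix i assume i: "n < i"
    show "coeff p' i = 0"
    proof (cases "i = Suc n")
      case True then show ?thesis using lc deg[of "Suc n"] by (simp add: p'_def c0_def)
    next
      case False
      then have "i > Suc n" using i by simp
      then show ?thesis using Suc.prems deg[of "Suc n"] by (simp add: p'_def coeff_eq_0)
    qed
  qed
  then obtain c where c: "p' = (\<Sum>k\<le>n. smult (c k) (Q k))" using Suc.IH by blast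
  have "p = p' + smult c0 (Q (Suc n))" by (simp add: p'_def)
  also have "\<dots> = (\<Sum>k\<le>Suc n. smult ((c(Suc n := c0)) k) (Q k))"
    by (simp add: c)
  finally show ?case by blast
qed

lemma ip_sum_Q: "finite A \<Longrightarrow> ip (\<Sum>k\<in>A. smult (c k) (Q k)) (Q j) = (if j \<in> A then c j else 0)"
  by (simp add: sob_ip_sum_left sob_ip_smult_left orth if_distrib sum.delta cong: if_cong)

lemma expand: "degree p \<le> n \<Longrightarrow> p = (\<Sum>k\<le>n. smult (ip p (Q k)) (Q k))"
proof -
  assume "degree p \<le> n"
  then obtain c where c: "p = (\<Sum>k\<le>n. smult (c k) (Q k))" using span by blast
  have "ip p (Q k) = c k" if "k \<le> n" for k
    using that by (simp add: c ip_sum_Q)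
  then show ?thesis by (subst c) (intro sum.cong refl, simp)
qed

lemma orth_low: "degree p < n \<Longrightarrow> ip p (Q n) = 0"
proof -
  assume a: "degree p < n"
  then have "degree p \<le> n - 1" by simp
  then have "p = (\<Sum>k\<le>n-1. smult (ip p (Q k)) (Q k))" by (rule expand)
  then have "ip p (Q n) = ip (\<Sum>k\<le>n-1. smult (ip p (Q k)) (Q k)) (Q n)" by simp
  also have "\<dots> = 0" using a by (subst ip_sum_Q) auto
  finally show ?thesis .
qed

lemma degree_refl: "degree (p \<circ>\<^sub>p [:0,-1:]) = degree (p::real poly)"
  by (simp add: degree_pcompose)

lemma par_Q: "par n (Q n)"
proof -
  define R where "R = smult ((-1)^n) (Q n \<circ>\<^sub>p [:0,-1:])"
  have dR: "degree R = n" by (simp add: R_def degree_refl deg)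
  have lc: "lead_coeff (Q n \<circ>\<^sub>p [:0,-1:]) = lead_coeff (Q n) * (-1)^n"
    using lead_coeff_comp[of "[:0,-1::real:]" "Q n"] deg[of n] by simp
  have lR: "lead_coeff R = lead_coeff (Q n)"
    using lc dR by (simp add: R_def degree_refl deg flip: power_mult_distrib)
  have z: "ip R (Q k) = 0" if "k < n" for k
  proof -
    have "ip R (Q k) = (-1)^n * ip (Q n \<circ>\<^sub>p [:0,-1:]) (Q k)" by (simp add: R_def sob_ip_smult_left)
    also have "ip (Q n \<circ>\<^sub>p [:0,-1:]) (Q k) = ip (Q n \<circ>\<^sub>p [:0,-1:]) (Q k \<circ>\<^sub>p [:0,-1:] \<circ>\<^sub>p [:0,-1:])"
      by (simp add: refl_refl)
    also have "\<dots> = ip (Q n) (Q k \<circ>\<^sub>p [:0,-1:])" by (rule sob_ip_reflect)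
    also have "\<dots> = ip (Q k \<circ>\<^sub>p [:0,-1:]) (Q n)" by (rule sob_ip_sym)
    also have "\<dots> = 0" using that by (intro orth_low) (simp add: degree_refl deg)
    finally show ?thesis by simp
  qed
  have "R = (\<Sum>k\<le>n. smult (ip R (Q k)) (Q k))" using dR by (intro expand) simp
  also have "\<dots> = (\<Sum>k\<in>insert n {..<n}. smult (ip R (Q k)) (Q k))" by (simp add: lessThan_Suc_atMost[symmetric] atLeast0LessThan)
  also have "\<dots> = smult (ip R (Q n)) (Q n)" using z by (simp add: sum.insert)
  finally have R: "R = smult (ip R (Q n)) (Q n)" .
  then have "lead_coeff R = ip R (Q n) * lead_coeff (Q n)" by (metis lead_coeff_smult)
  then have "ip R (Q n) = 1" using lR lead[of n] Q_nz[of n] by simp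
  with R have "R = Q n" by simp
  then have "smult ((-1)^n) R = smult ((-1)^n) (Q n)" by simp
  moreover have "smult ((-1)^n) R = Q n \<circ>\<^sub>p [:0,-1:]"
    by (simp add: R_def smult_smult flip: power_mult_distrib)
  ultimately show ?thesis unfolding par_def by simp
qed

definition \<alpha> where "\<alpha> n = ip ([:0,0,1:] * Q n) (Q (n+2))"
definition \<beta> where "\<beta> n = ip ([:0,0,1:] * Q n) (Q n)"

lemma degree_X2: "degree ([:0,0,1:] * p) = (if p = 0 then 0 else degree p + 2)" for p :: "real poly"
  by (cases "p = 0") (simp_all add: degree_mult_eq)

lemma rec: "[:0,0,1:] * Q n = smult (\<alpha> n) (Q (n + 2)) + smult (\<beta> n) (Q n)
                + (if n \<ge> 2 then smult (\<alpha> (n - 2)) (Q (n - 2)) else 0)"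
proof -
  define P where "P = [:0,0,1:] * Q n"
  define c where "c k = ip P (Q k)" for k
  define S where "S = {n+2, n} \<union> (if 2 \<le> n then {n-2} else {})"
  have dP: "degree P = n + 2" by (simp add: P_def degree_X2 Q_nz deg)
  have parP: "par (2 + n) P" unfolding P_def by (intro par_mult par_X2 par_Q)
  have P: "P = (\<Sum>k\<le>n+2. smult (c k) (Q k))" unfolding c_def by (intro expand) (simp add: dP)
  have zero: "smult (c k) (Q k) = 0" if "k \<in> {..n+2} - S" for k
  proof (cases "odd (2 + n + k)")
    case True
    then have "c k = 0" unfolding c_def by (intro par_ip[OF parP par_Q])
    then show ?thesis by simp
  next
    case False
    with that have "k + 2 < n" unfolding S_def by (auto split: if_splits) presburger+
    then have "ip ([:0,0,1:] * Q k) (Q n) = 0" by (intro orth_low) (simp add: degree_X2 Q_nz deg)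
    moreover have "c k = ip ([:0,0,1:] * Q k) (Q n)" unfolding c_def P_def
      using sob_ip_x2_sym[of l1 l2 "Q n" "Q k"] sob_ip_sym[of l1 l2 "Q n" "[:0,0,1:] * Q k"] by simp
    ultimately have "c k = 0" by simp
    then show ?thesis by simp
  qed
  have PS: "P = (\<Sum>k\<in>S. smult (c k) (Q k))"
    unfolding P by (rule sum.mono_neutral_right) (use zero in \<open>auto simp: S_def\<close>)
  have ca: "c (n+2) = \<alpha> n" and cb: "c n = \<beta> n" unfolding c_def P_def \<alpha>_def \<beta>_def by simp_all
  have ca2: "c (n-2) = \<alpha> (n-2)" if "2 \<le> n"
  proof -
    have "c (n-2) = ip (Q n) ([:0,0,1:] * Q (n-2))" unfolding c_def P_def by (rule sob_ip_x2_sym)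
    also have "\<dots> = \<alpha> (n-2)"
    proof -
      have e: "n - 2 + 2 = n" using that by simp
      show ?thesis unfolding \<alpha>_def e by (rule sob_ip_sym)
    qed
    finally show ?thesis .
  qed
  show ?thesis
  proof (cases "2 \<le> n")
    case True
    then have "S = insert (n+2) (insert n {n-2})" unfolding S_def by auto
    moreover have "n + 2 \<notin> insert n {n-2}" "n \<notin> {n-2}" using True by auto
    ultimately have "P = smult (c (n+2)) (Q (n+2)) + smult (c n) (Q n) + smult (c (n-2)) (Q (n-2))"
      unfolding PS by (simp only: sum.insert finite_insert finite.emptyI sum.empty) (simp add: add.assoc)
    then show ?thesis unfolding P_def[symmetric] using True ca cb ca2 by simp
  next
    case False
    then have "S = insert (n+2) {n}" unfolding S_def by auto
    then have "P = smult (c (n+2)) (Q (n+2)) + smult (c n) (Q n)"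
      unfolding PS by simp
    then show ?thesis unfolding P_def[symmetric] using False ca cb by simp
  qed
qed

lemma alpha_pos: "\<alpha> n > 0"
proof -
  have d: "degree ([:0,0,1:] * Q n) = n + 2" by (simp add: degree_X2 Q_nz deg)
  have l: "lead_coeff ([:0,0,1:] * Q n) = lead_coeff (Q n)"
    by (simp only: lead_coeff_mult) simp
  have "coeff ([:0,0,1:] * Q n) (n+2) = lead_coeff (Q n)" using d l by simp
  moreover have "coeff ([:0,0,1:] * Q n) (n+2) = \<alpha> n * lead_coeff (Q (n+2))"
    by (subst rec) (simp add: deg coeff_eq_0)
  ultimately have "\<alpha> n * lead_coeff (Q (n+2)) = lead_coeff (Q n)" by simp
  then show ?thesis using lead[of n] lead[of "n+2"] by (metis zero_less_mult_pos2)
qed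

lemma two_smult: "2 * p = smult 2 (p::real poly)"
proof -
  have "smult 2 p = smult (1+1) p" by (simp only: one_add_one)
  also have "\<dots> = p + p" by (simp only: smult_add_left smult_1_left)
  also have "\<dots> = 2 * p" by (rule mult_2[symmetric])
  finally show ?thesis by (rule sym)
qed

definition W where "W n = pderiv (Q (n+2)) * Q n - pderiv (Q n) * Q (n+2)"

lemma wr_ring:
  fixes a b f g H dH df dg X D2 :: "'a::comm_ring"
  assumes "a * f = X * g - b * g - H" and "a * df = D2 * g + X * dg - b * dg - dH"
  shows "a * (df * g - dg * f) = D2 * g * g + (dg * H - dH * g)"
proof -
  have "a * (df * g - dg * f) = (a * df) * g - dg * (a * f)" by (simp add: algebra_simps)
  also have "\<dots> = (D2 * g + X * dg - b * dg - dH) * g - dg * (X * g - b * g - H)"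
    using assms by simp
  also have "\<dots> = D2 * g * g + (dg * H - dH * g)" by (simp add: algebra_simps)
  finally show ?thesis .
qed

lemma smult_cm: "smult a p = [:a:] * p" by simp

lemma W_rec: "smult (\<alpha> n) (W n) = [:0,2:] * Q n * Q n + (if n \<ge> 2 then smult (\<alpha> (n-2)) (W (n-2)) else 0)"
proof -
  define H where "H = (if n \<ge> 2 then smult (\<alpha> (n - 2)) (Q (n - 2)) else 0)"
  have e: "smult (\<alpha> n) (Q (n+2)) = [:0,0,1:] * Q n - smult (\<beta> n) (Q n) - H"
    using rec[of n] unfolding H_def by (simp only: eq_diff_eq add.assoc)
  have d2: "pderiv ([:0,0,1:] * Q n) = [:0,2:] * Q n + [:0,0,1:] * pderiv (Q n)"
    by (simp add: pderiv_mult pderiv_pCons two_smult)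
  have de: "smult (\<alpha> n) (pderiv (Q (n+2))) = [:0,2:] * Q n + [:0,0,1:] * pderiv (Q n) - smult (\<beta> n) (pderiv (Q n)) - pderiv H"
    using arg_cong[OF e, of pderiv] unfolding pderiv_diff d2 pderiv_smult .
  have main: "smult (\<alpha> n) (W n) = [:0,2:] * Q n * Q n + (pderiv (Q n) * H - pderiv H * Q n)"
    unfolding W_def smult_cm
    by (rule wr_ring) (use e de in \<open>simp_all only: smult_cm\<close>)
  also have "pderiv (Q n) * H - pderiv H * Q n = (if n \<ge> 2 then smult (\<alpha> (n-2)) (W (n-2)) else 0)"
  proof (cases "n \<ge> 2")
    case True
    then have nn: "n - 2 + 2 = n" by simp
    show ?thesis using True unfolding H_def W_def nn
      by (simp add: pderiv_smult smult_diff_right mult_smult_left mult_smult_right mult.commute)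
  qed (simp add: H_def)
  finally show ?thesis .
qed

lemma Q0_poly: "poly (Q 0) x \<noteq> 0"
proof -
  have "poly (Q 0) x = coeff (Q 0) 0" using deg[of 0] by (simp add: poly_altdef)
  then show ?thesis using lead[of 0] deg[of 0] by simp
qed

lemma Q1_poly: "x \<noteq> 0 \<Longrightarrow> poly (Q 1) x \<noteq> 0"
proof -
  assume x: "x \<noteq> 0"
  have p: "poly (Q 1) y = coeff (Q 1) 0 + coeff (Q 1) 1 * y" for y using deg[of 1] by (simp add: poly_altdef)
  have "poly (Q 1) 0 = 0" using par_Q[of 1] by (rule par_odd0) simp
  then have "coeff (Q 1) 0 = 0" using p[of 0] by simp
  moreover have "coeff (Q 1) 1 > 0" using lead[of 1] deg[of 1] by simp
  ultimately show ?thesis using p[of x] x by simp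
qed

lemma W_pos: "x > 0 \<Longrightarrow> poly (W n) x > 0"
proof (induction n rule: less_induct)
  case (less n)
  have e: "\<alpha> n * poly (W n) x = 2 * x * poly (Q n) x ^ 2 + (if n \<ge> 2 then \<alpha> (n-2) * poly (W (n-2)) x else 0)"
    using arg_cong[OF W_rec[of n], of "\<lambda>p. poly p x"] by (simp add: power2_eq_square algebra_simps)
  have "\<alpha> n * poly (W n) x > 0"
  proof (cases "n \<ge> 2")
    case True
    then have "poly (W (n-2)) x > 0" using less by simp
    then have "\<alpha> (n-2) * poly (W (n-2)) x > 0" using alpha_pos by simp
    moreover have "2 * x * poly (Q n) x ^ 2 \<ge> 0" using less.prems by simp
    ultimately show ?thesis using e True by simp
  next
    case False
    then have "n = 0 \<or> n = 1" by auto
    then have "poly (Q n) x \<noteq> 0" using Q0_poly Q1_poly less.prems by auto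
    then have "2 * x * poly (Q n) x ^ 2 > 0" using less.prems by simp
    then show ?thesis using e False by simp
  qed
  then show ?case using alpha_pos[of n] by (simp add: zero_less_mult_iff)
qed

definition Z where "Z n = {y. 0 < y \<and> poly (Q n) y = 0}"

lemma finite_Z: "finite (Z n)"
  using poly_roots_finite[OF Q_nz[of n]] unfolding Z_def by (rule rev_finite_subset) auto

lemma simple_root: "2 \<le> n \<Longrightarrow> y \<in> Z n \<Longrightarrow> poly (pderiv (Q n)) y * poly (Q (n-2)) y > 0"
proof -
  assume n: "2 \<le> n" and y: "y \<in> Z n"
  have nn: "n - 2 + 2 = n" using n by simp
  have "poly (W (n-2)) y > 0" using y by (intro W_pos) (simp add: Z_def)
  then show ?thesis using y unfolding W_def nn by (simp add: Z_def)
qed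

definition Aset where "Aset n = Z n \<union> uminus ` Z n \<union> (if odd n then {0} else {})"

lemma finite_A: "finite (Aset n)" unfolding Aset_def using finite_Z by simp

lemma A_neg: "a \<in> Aset n \<Longrightarrow> -a \<in> Aset n" unfolding Aset_def by (auto split: if_splits)

lemma A_roots: "a \<in> Aset n \<Longrightarrow> poly (Q n) a = 0"
  unfolding Aset_def using par_poly[OF par_Q[of n]] par_odd0[OF par_Q[of n]]
  by (auto simp: Z_def split: if_splits)

lemma card_A: "card (Aset n) = 2 * card (Z n) + n mod 2"
proof -
  have d1: "Z n \<inter> uminus ` Z n = {}" unfolding Z_def by auto
  have d2: "(Z n \<union> uminus ` Z n) \<inter> (if odd n then {0} else {}) = {}" unfolding Z_def by auto
  have c: "card (uminus ` Z n) = card (Z n)" by (rule card_image) (simp add: inj_on_def)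
  have "card (Aset n) = card (Z n \<union> uminus ` Z n) + card (if odd n then {0::real} else {})"
    unfolding Aset_def using d2 finite_Z by (intro card_Un_disjoint) auto
  also have "card (Z n \<union> uminus ` Z n) = card (Z n) + card (uminus ` Z n)"
    using d1 finite_Z by (intro card_Un_disjoint) auto
  finally show ?thesis using c by (auto simp: odd_iff_mod_2_eq_one)
qed

lemma card_A_le: "card (Aset n) \<le> n"
proof -
  have "card (Aset n) \<le> card {x. poly (Q n) x = 0}"
    using A_roots poly_roots_finite[OF Q_nz[of n]] by (intro card_mono) auto
  also have "\<dots> \<le> degree (Q n)" by (rule card_poly_roots_bound[OF Q_nz])
  finally show ?thesis by (simp add: deg)
qed

lemma count_le: "card (Z n) \<le> n div 2"
  using card_A_le[of n] card_A[of n] by simp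

lemma prodA_poly: "poly (\<Prod>a\<in>Aset n. [:-a,1:]) x = (\<Prod>a\<in>Aset n. x - a)"
  by (simp add: poly_prod)

lemma prodA_zero: "poly (\<Prod>a\<in>Aset n. [:-a,1:]) x = 0 \<longleftrightarrow> x \<in> Aset n"
  unfolding prodA_poly using finite_A by (simp add: prod_zero_iff)

lemma prodA_degree: "degree (\<Prod>a\<in>Aset n. [:-a,1:]) = card (Aset n)"
  by (subst degree_prod_sum_eq) auto

lemma prodA_neg: "poly (\<Prod>a\<in>Aset n. [:-a,1:]) (-x) = (-1)^(card (Aset n)) * poly (\<Prod>a\<in>Aset n. [:-a,1:]) x"
proof -
  have im: "uminus ` Aset n = Aset n"
    using A_neg by (auto intro!: image_eqI[where x="- _"])
  have "(\<Prod>a\<in>Aset n. -x - a) = (\<Prod>a\<in>Aset n. (-1) * (x + a))" by (intro prod.cong) auto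
  also have "\<dots> = (-1)^(card (Aset n)) * (\<Prod>a\<in>Aset n. x + a)" by (simp only: prod.distrib prod_constant)
  also have "(\<Prod>a\<in>Aset n. x + a) = (\<Prod>a\<in>uminus ` Aset n. x - a)"
    by (subst prod.reindex) (auto simp: inj_on_def)
  also have "\<dots> = (\<Prod>a\<in>Aset n. x - a)" by (simp only: im)
  finally have eq: "(\<Prod>a\<in>Aset n. -x - a) = (-1)^(card (Aset n)) * (\<Prod>a\<in>Aset n. x - a)" .
  show ?thesis unfolding prodA_poly by (rule eq)
qed

lemma count_ge: "n div 2 \<le> card (Z n)"
proof (rule ccontr)
  assume "\<not> n div 2 \<le> card (Z n)"
  then have lt: "card (Z n) < n div 2" by simp
  then have n2: "2 \<le> n" by simp
  define A where "A = Aset n"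
  define P where "P = (\<Prod>a\<in>A. [:-a,1:])"
  obtain T where QT: "Q n = P * T" unfolding P_def A_def using prod_roots_dvd[OF finite_A A_roots] by blast
  have Pz: "poly P x = 0 \<longleftrightarrow> x \<in> A" for x unfolding P_def A_def by (rule prodA_zero)
  have degP: "degree P < n" unfolding P_def A_def prodA_degree card_A using lt by simp
  have ortho: "ip (Q n) P = 0" using orth_low[OF degP] by (simp add: sob_ip_sym)
  have cardpar: "(-1::real)^(card A) = (-1)^n"
  proof -
    have "card A = 2 * card (Z n) + n mod 2" unfolding A_def by (rule card_A)
    then have "even (card A + n)" by presburger
    then show ?thesis by (metis neg_one_even_power neg_one_odd_power even_add)
  qed
  have Tev: "poly T (-x) = poly T x" if "x \<notin> A" for x
  proof -
    have px: "poly P x \<noteq> 0" using Pz that by simp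
    have "poly P (-x) * poly T (-x) = (-1)^n * (poly P x * poly T x)"
      using par_poly[OF par_Q[of n], of x] unfolding QT by simp
    moreover have "poly P (-x) = (-1)^n * poly P x"
      using prodA_neg[of n x] cardpar unfolding P_def A_def by simp
    ultimately have "(-1)^n * poly P x * (poly T (-x) - poly T x) = 0" by (simp add: algebra_simps)
    then show ?thesis using px by simp
  qed
  have "T \<circ>\<^sub>p [:0,-1:] - T = 0"
    by (rule poly_zero_outside_finite[of A]) (auto simp: A_def finite_A poly_pcompose Tev)
  then have parT: "par 0 T" unfolding par_def by simp
  have dT0: "poly (pderiv T) 0 = 0" using par_deriv0[OF parT] by simp
  have Tev': "poly T (-x) = poly T x" for x using par_poly[OF parT] by simp
  have Tnz: "poly T x \<noteq> 0" if "x > 0" for x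
  proof (cases "x \<in> Z n")
    case True
    then have xA: "x \<in> A" unfolding A_def Aset_def by simp
    have "poly (pderiv (Q n)) x \<noteq> 0" using simple_root[OF n2 True] by auto
    moreover have "poly (pderiv (Q n)) x = poly T x * poly (pderiv P) x"
      unfolding QT pderiv_mult using Pz[of x] xA by simp
    ultimately show ?thesis by auto
  next
    case False
    then have "poly (Q n) x \<noteq> 0" using that unfolding Z_def by simp
    then show ?thesis unfolding QT by simp
  qed
  define \<sigma> where "\<sigma> = poly T 1"
  have spos: "\<sigma> * poly T x > 0" if "x \<noteq> 0" for x
  proof (cases "x > 0")
    case True then show ?thesis unfolding \<sigma>_def using same_sign_pos[OF Tnz] by simp
  next
    case False
    then have "-x > 0" using that by simp
    then show ?thesis unfolding \<sigma>_def using same_sign_pos[OF Tnz, of 1 "-x"] Tev' by simp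
  qed
  have s0: "\<sigma> * poly T 0 \<ge> 0"
  proof (rule ccontr)
    assume "\<not> \<sigma> * poly T 0 \<ge> 0"
    then have "poly T 0 * poly T 1 < 0" unfolding \<sigma>_def by (simp add: mult.commute)
    then obtain c where "c > 0" "poly T c = 0" using poly_IVT[of 0 1 T] by auto
    then show False using Tnz by blast
  qed
  have snn: "\<sigma> * poly T x \<ge> 0" for x using spos[of x] s0 by (cases "x = 0") auto
  obtain x0 where x0: "x0 > 0" "x0 \<notin> A" using ex_pos_notin[OF finite_A[of n]] unfolding A_def by blast
  define q where "q = smult \<sigma> (T * P * P)"
  have qnn: "poly q x \<ge> 0" for x
  proof -
    have "poly q x = (\<sigma> * poly T x) * (poly P x)^2" unfolding q_def by (simp add: power2_eq_square)
    then show ?thesis using snn[of x] by simp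
  qed
  have qpos: "poly q x0 > 0"
  proof -
    have "poly q x0 = (\<sigma> * poly T x0) * (poly P x0)^2" unfolding q_def by (simp add: power2_eq_square)
    moreover have "poly P x0 \<noteq> 0" using Pz x0 by simp
    ultimately show ?thesis using spos[of x0] x0 by simp
  qed
  have int: "(\<integral>x. poly q x * exp (- (x^4)) \<partial>lborel) = \<sigma> * (\<integral>x. poly (Q n) x * poly P x * exp (- (x^4)) \<partial>lborel)"
  proof -
    have "(\<integral>x. poly q x * exp (- (x^4)) \<partial>lborel) = (\<integral>x. \<sigma> * (poly (Q n) x * poly P x * exp (- (x^4))) \<partial>lborel)"
      unfolding q_def QT by (simp add: algebra_simps)
    then show ?thesis by simp
  qed
  have "\<sigma> * ip (Q n) P = (\<integral>x. poly q x * exp (- (x^4)) \<partial>lborel)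
        + l1 * (\<sigma> * poly T 0) * (poly P 0)^2 + l2 * (\<sigma> * poly T 0) * (poly (pderiv P) 0)^2"
    unfolding int sob_ip_def QT pderiv_mult using dT0 by (simp add: algebra_simps power2_eq_square)
  moreover have "(\<integral>x. poly q x * exp (- (x^4)) \<partial>lborel) > 0" by (rule integral_poly_pos[OF qnn qpos])
  moreover have "l1 * (\<sigma> * poly T 0) * (poly P 0)^2 \<ge> 0" using l1 s0 by simp
  moreover have "l2 * (\<sigma> * poly T 0) * (poly (pderiv P) 0)^2 \<ge> 0" using l2 s0 by simp
  ultimately have "\<sigma> * ip (Q n) P > 0" by linarith
  then show False using ortho by simp
qed

lemma card_Z: "card (Z n) = n div 2"
  using count_le count_ge by (simp add: le_antisym)

lemma card_Aset: "card (Aset n) = n"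
  using card_A[of n] card_Z[of n] by simp

lemma complex_roots_real:
  assumes z: "poly (map_poly complex_of_real (Q n)) z = 0"
  shows "Im z = 0"
proof (rule ccontr)
  assume nz: "Im z \<noteq> 0"
  define Qc where "Qc = map_poly complex_of_real (Q n)"
  have dQc: "degree Qc = n" unfolding Qc_def by (subst degree_map_poly) (auto simp: deg)
  have Qc0: "Qc \<noteq> 0"
  proof
    assume "Qc = 0"
    then have "coeff Qc n = 0" by simp
    moreover have "coeff Qc n = of_real (lead_coeff (Q n))" unfolding Qc_def by (simp add: coeff_map_poly deg)
    ultimately show False using lead[of n] by simp
  qed
  let ?R = "{w. poly Qc w = 0}"
  have fin: "finite ?R" by (rule poly_roots_finite[OF Qc0])
  have sub: "insert z (complex_of_real ` Aset n) \<subseteq> ?R"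
    using z A_roots unfolding Qc_def by (auto simp: poly_of_real_map)
  have "z \<notin> complex_of_real ` Aset n" using nz by auto
  then have "card (insert z (complex_of_real ` Aset n)) = n + 1"
    using finite_A card_Aset by (simp add: card_image inj_on_def)
  moreover have "card (insert z (complex_of_real ` Aset n)) \<le> card ?R" using fin sub by (rule card_mono)
  moreover have "card ?R \<le> n" using card_poly_roots_bound[OF Qc0] dQc by simp
  ultimately show False by simp
qed

lemma gap_root:
  assumes n2: "2 \<le> n" and i: "Suc i < n div 2"
  shows "\<exists>c. c \<in> Z (n-2) \<and> sorted_list_of_set (Z n) ! i < c \<and> c < sorted_list_of_set (Z n) ! Suc i"
proof -
  let ?ys = "sorted_list_of_set (Z n)"
  define a where "a = ?ys ! i"
  define b where "b = ?ys ! Suc i"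
  have len: "length ?ys = n div 2" using card_Z by simp
  have aZ: "a \<in> Z n" unfolding a_def using i len finite_Z[of n] by (metis Suc_lessD nth_mem set_sorted_list_of_set)
  have bZ: "b \<in> Z n" unfolding b_def using i len finite_Z[of n] by (metis nth_mem set_sorted_list_of_set)
  have ab: "a < b" unfolding a_def b_def using sorted_list_strict[OF finite_Z, of i "Suc i" n] i card_Z by simp
  have nzab: "poly (Q n) x \<noteq> 0" if x: "a < x" "x < b" for x
  proof
    assume "poly (Q n) x = 0"
    moreover have "x > 0" using aZ x by (simp add: Z_def)
    ultimately have "x \<in> Z n" by (simp add: Z_def)
    then obtain j where j: "j < length ?ys" "?ys ! j = x" using finite_Z[of n]
      by (metis in_set_conv_nth set_sorted_list_of_set)
    have "i < j"
    proof (rule ccontr)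
      assume "\<not> i < j"
      then have "j \<le> i" by simp
      then have "?ys ! j \<le> ?ys ! i" using i len by (intro sorted_nth_mono) auto
      then show False using j x unfolding a_def by simp
    qed
    moreover have "j < Suc i"
    proof (rule ccontr)
      assume "\<not> j < Suc i"
      then have "Suc i \<le> j" by simp
      then have "?ys ! Suc i \<le> ?ys ! j" using j by (intro sorted_nth_mono) auto
      then show False using j x unfolding b_def by simp
    qed
    ultimately show False by simp
  qed
  have sa: "poly (pderiv (Q n)) a * poly (Q (n-2)) a > 0" by (rule simple_root[OF n2 aZ])
  have sb: "poly (pderiv (Q n)) b * poly (Q (n-2)) b > 0" by (rule simple_root[OF n2 bZ])
  have "poly (pderiv (Q n)) a * poly (pderiv (Q n)) b < 0"
    using ab aZ bZ nzab sa sb by (intro consec_deriv) (auto simp: Z_def)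
  then have "poly (Q (n-2)) a * poly (Q (n-2)) b < 0"
    using sa sb by (smt (verit, ccfv_threshold) mult_less_0_iff mult_pos_pos zero_less_mult_iff)
  then obtain c where c: "a < c" "c < b" "poly (Q (n-2)) c = 0" using poly_IVT[OF ab] by blast
  moreover have "c > 0" using aZ c by (simp add: Z_def)
  ultimately show ?thesis unfolding a_def b_def using c by (intro exI[of _ c]) (simp add: Z_def)
qed

lemma interlace_Q:
  assumes n2: "2 \<le> n"
  shows "interlace (Q n) (Q (n-2))"
proof -
  have Zeq: "{y. 0 < y \<and> poly (Q m) y = 0} = Z m" for m unfolding Z_def by simp
  let ?ys = "sorted_list_of_set (Z n)"
  define k where "k = n div 2 - 1"
  have kZ: "card (Z (n-2)) = k" unfolding k_def card_Z by (simp add: div_diff)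
  have m1: "n div 2 = Suc k" unfolding k_def using n2 by simp
  define \<phi> where "\<phi> i = (SOME c. c \<in> Z (n-2) \<and> ?ys ! i < c \<and> c < ?ys ! Suc i)" for i
  have \<phi>: "\<phi> i \<in> Z (n-2) \<and> ?ys ! i < \<phi> i \<and> \<phi> i < ?ys ! Suc i" if "i < k" for i
    unfolding \<phi>_def by (rule someI_ex) (rule gap_root[OF n2], use that m1 in simp)
  have len: "length ?ys = Suc k" using card_Z m1 by simp
  have strict: "\<phi> i < \<phi> j" if ij: "i < j" "j < k" for i j
  proof -
    have "?ys ! Suc i \<le> ?ys ! j" using ij len by (intro sorted_nth_mono) auto
    then show ?thesis using \<phi>[of i] \<phi>[of j] ij by simp
  qed
  define xs where "xs = map \<phi> [0..<k]"
  have lxs: "length xs = k" by (simp add: xs_def)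
  have sxs: "sorted xs" unfolding sorted_iff_nth_mono_less lxs
    by (auto simp: xs_def intro: less_imp_le strict)
  have dxs: "distinct xs" unfolding distinct_conv_nth lxs
  proof (intro allI impI)
    fix i j assume "i < k" "j < k" "i \<noteq> j"
    then show "xs ! i \<noteq> xs ! j" using strict[of i j] strict[of j i] by (cases "i < j") (auto simp: xs_def)
  qed
  have setxs: "set xs = Z (n-2)"
  proof (rule card_subset_eq)
    show "finite (Z (n-2))" by (rule finite_Z)
    show "set xs \<subseteq> Z (n-2)" using \<phi> by (auto simp: xs_def)
    show "card (set xs) = card (Z (n-2))" using distinct_card[OF dxs] lxs kZ by simp
  qed
  have zs: "sorted_list_of_set (Z (n-2)) = xs"
    using sorted_list_of_set.idem_if_sorted_distinct[OF sxs dxs] setxs by simp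
  show ?thesis
    unfolding interlace_def pos_zeros_def Zeq Let_def zs
    using len lxs \<phi> by (auto simp: xs_def)
qed

end

theorem mainTheorem9:
  fixes l1 l2 :: real and Q :: "nat \<Rightarrow> real poly"
  assumes "l1 \<ge> 0" and "l2 > 0"
    and deg: "\<And>n. degree (Q n) = n"
    and lead: "\<And>n. lead_coeff (Q n) > 0"
    and orth: "\<And>n m. sob_ip l1 l2 (Q n) (Q m) = (if n = m then 1 else 0)"
  shows "(\<exists>\<alpha> \<beta> :: nat \<Rightarrow> real. \<forall>n.
            [:0, 0, 1:] * Q n
              = smult (\<alpha> n) (Q (n + 2)) + smult (\<beta> n) (Q n)
                + (if n \<ge> 2 then smult (\<alpha> (n - 2)) (Q (n - 2)) else 0))
       \<and> (\<forall>n \<ge> 2. (\<forall>z. poly (map_poly complex_of_real (Q n)) z = 0 \<longrightarrow> Im z = 0)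
                  \<and> interlace (Q n) (Q (n - 2)))"
proof -
  interpret sob l1 l2 Q using assms by unfold_locales auto
  show ?thesis
    using rec complex_roots_real interlace_Q by blast
qed

end
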